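(* Let $\mathcal S$ be a trajectory set satisfying (nL), i.e. $\bar\sigma(0)\ge0$ holds in the shifted conditional space $\mathcal S^{(S,j)}$ for every $S\in\mathcal S$ and $j\in\mathbb N_0$. Then $\mathcal S$ satisfies (nK), i.e. for every $S\in\mathcal S$ and $j\in\mathbb N_0$ the shifted conditional space $\mathcal S^{(S,j)}$ satisfies (LOP) and (K).
   Context: Fix $s_0\in\mathbb R$. A trajectory set (with initial value $s_0$) is any set $\mathcal S$ of real sequences $S=(S_j)_{j\in\mathbb N_0}$ with $S_0=s_0$. All of the following notions are defined for an arbitrary trajectory set $\mathcal T$ (in place of $\mathcal S$). A simple portfolio $(V,n,H)$ consists of $V\in\mathbb R$, $n\in\mathbb N$ and nonanticipating functions $H_i:\mathcal T\to\mathbb R$, $0\le i\le n-1$ (i.e. $H_i(S)=h_i(S_0,\dots,S_i)$ for some arbitrary $h_i:\mathbb R^{i+1}\to\mathbb R$). Its wealth is $\Pi^{V,n,H}_j(S)=V+\sum_{i=0}^{\min\{j,n\}-1}H_i(S)(S_{i+1}-S_i)$ and $\Pi^{V,n,H}_\infty:=\Pi^{V,n,H}_n$; it is positive if $V\ge0$ and $\Pi^{V,n,H}_\infty\ge0$ on $\mathcal T$. A generalized portfolio is a sequence $(V_m,n_m,H_m)_{m\in\mathbb N_0}$ of simple portfolios, positive for every $m\ge1$; it is a positive generalized portfolio if moreover $\Pi^{V_0,n_0,H_0}_j\equiv0$ for all $j$. A map $f:\mathcal T\to[-\infty,+\infty]$ is superhedged with initial endowment $V=\sum_{m=0}^\infty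 V_m\in(-\infty,+\infty]$ by such a portfolio if $f\le\sum_{m=0}^\infty\Pi^{V_m,n_m,H_m}_\infty$ on $\mathcal T$. For $f\ge0$, $\bar I(f)$ is the infimum of initial endowments of positive generalized portfolios superhedging $f$; $\bar\sigma(f)$ is the infimum of initial endowments of generalized portfolios superhedging $f$. Let $\mathcal E=\{\Pi^{V,n,H}_\infty\}$ over all simple portfolios. (LOP): whenever two simple portfolios have equal terminal wealth $\Pi_\infty$ on all of $\mathcal T$, their initial endowments coincide; under (LOP), $I(\Pi^{V,n,H}_\infty):=V$ is well defined on $\mathcal E$. (K): $I(f)+\bar I(f^-)\le\bar I(f^+)$ for every $f\in\mathcal E$. For $S\in\mathcal S$, $j\in\mathbb N_0$, the conditional space is $\mathcal S_{(S,j)}=\{\tilde S\in\mathcal S:(\tilde S_0,\dots,\tilde S_j)=(S_0,\dots,S_j)\}$ and the shifted conditional space is $\mathcal S^{(S,j)}=\{(\tilde S_{j+i})_{i\in\mathbb N_0}:\tilde S\in\mathcal S_{(S,j)}\}$, a trajectory set with initial value $S_j$. *)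

theory Defs
  imports "HOL-Analysis.Analysis"
begin

text \<open>A trading strategy is given by the functions
\<open>h i :: real list \<Rightarrow> real\<close>, so that \<open>H_i(S) = h_i(S_0,...,S_i)\<close> is nonanticipating by
construction.\<close>

type_synonym traj = "nat \<Rightarrow> real"
type_synonym strategy = "nat \<Rightarrow> real list \<Rightarrow> real"
type_synonym simple_pf = "real \<times> nat \<times> strategy"

definition trajectory_set :: "real \<Rightarrow> traj set \<Rightarrow> bool" where
  "trajectory_set s0 T \<longleftrightarrow> (\<forall>S\<in>T. S 0 = s0)"

definition Hval :: "strategy \<Rightarrow> nat \<Rightarrow> traj \<Rightarrow> real" where
  "Hval h i S = h i (map S [0..<Suc i])"

definition wealth :: "real \<Rightarrow> nat \<Rightarrow> strategy \<Rightarrow> nat \<Rightarrow> traj \<Rightarrow> real" where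
  "wealth V n h j S = V + (\<Sum>i<min j n. Hval h i S * (S (Suc i) - S i))"

definition wealth_inf :: "real \<Rightarrow> nat \<Rightarrow> strategy \<Rightarrow> traj \<Rightarrow> real" where
  "wealth_inf V n h S = wealth V n h n S"

definition simple_portfolio :: "simple_pf \<Rightarrow> bool" where
  "simple_portfolio P \<longleftrightarrow> fst (snd P) \<ge> 1"

definition positive_simple :: "traj set \<Rightarrow> simple_pf \<Rightarrow> bool" where
  "positive_simple T P \<longleftrightarrow> simple_portfolio P \<and> fst P \<ge> 0 \<and>
     (\<forall>S\<in>T. wealth_inf (fst P) (fst (snd P)) (snd (snd P)) S \<ge> 0)"

definition gen_portfolio :: "traj set \<Rightarrow> (nat \<Rightarrow> simple_pf) \<Rightarrow> bool" where
  "gen_portfolio T P \<longleftrightarrow> simple_portfolio (P 0) \<and> (\<forall>m\<ge>1. positive_simple T (P m))"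

definition pos_gen_portfolio :: "traj set \<Rightarrow> (nat \<Rightarrow> simple_pf) \<Rightarrow> bool" where
  "pos_gen_portfolio T P \<longleftrightarrow> gen_portfolio T P \<and>
     (\<forall>j. \<forall>S\<in>T. wealth (fst (P 0)) (fst (snd (P 0))) (snd (snd (P 0))) j S = 0)"

definition endowment :: "(nat \<Rightarrow> simple_pf) \<Rightarrow> ereal" where
  "endowment P = ereal (fst (P 0)) + (\<Sum>m. ereal (fst (P (Suc m))))"

definition gen_wealth :: "(nat \<Rightarrow> simple_pf) \<Rightarrow> traj \<Rightarrow> ereal" where
  "gen_wealth P S =
     ereal (wealth_inf (fst (P 0)) (fst (snd (P 0))) (snd (snd (P 0))) S) +
     (\<Sum>m. ereal (wealth_inf (fst (P (Suc m))) (fst (snd (P (Suc m)))) (snd (snd (P (Suc m)))) S))"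

definition superhedges :: "traj set \<Rightarrow> (traj \<Rightarrow> ereal) \<Rightarrow> (nat \<Rightarrow> simple_pf) \<Rightarrow> bool" where
  "superhedges T f P \<longleftrightarrow> (\<forall>S\<in>T. f S \<le> gen_wealth P S)"

definition barI :: "traj set \<Rightarrow> (traj \<Rightarrow> ereal) \<Rightarrow> ereal" where
  "barI T f = Inf {endowment P | P. pos_gen_portfolio T P \<and> superhedges T f P}"

definition barsigma :: "traj set \<Rightarrow> (traj \<Rightarrow> ereal) \<Rightarrow> ereal" where
  "barsigma T f = Inf {endowment P | P. gen_portfolio T P \<and> superhedges T f P}"

definition LOP :: "traj set \<Rightarrow> bool" where
  "LOP T \<longleftrightarrow> (\<forall>V1 n1 h1 V2 n2 h2. simple_portfolio (V1, n1, h1) \<longrightarrow> simple_portfolio (V2, n2, h2) \<longrightarrow>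
     (\<forall>S\<in>T. wealth_inf V1 n1 h1 S = wealth_inf V2 n2 h2 S) \<longrightarrow> V1 = V2)"

text \<open>(K): for \<open>f = \<Pi>^{V,n,H}_\<infinity> \<in> E\<close> we have \<open>I(f) = V\<close>.\<close>
definition cond_K :: "traj set \<Rightarrow> bool" where
  "cond_K T \<longleftrightarrow> (\<forall>V n h. simple_portfolio (V, n, h) \<longrightarrow>
     ereal V + barI T (\<lambda>S. ereal (max (- wealth_inf V n h S) 0))
       \<le> barI T (\<lambda>S. ereal (max (wealth_inf V n h S) 0)))"

definition cond_space :: "traj set \<Rightarrow> traj \<Rightarrow> nat \<Rightarrow> traj set" where
  "cond_space T S j = {S' \<in> T. \<forall>k\<le>j. S' k = S k}"

definition shifted_cond_space :: "traj set \<Rightarrow> traj \<Rightarrow> nat \<Rightarrow> traj set" where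
  "shifted_cond_space T S j = (\<lambda>S' i. S' (j + i)) ` cond_space T S j"

end

theory Submission
  imports Defs
begin


definition eff :: "nat \<Rightarrow> strategy \<Rightarrow> strategy" where
  "eff n h = (\<lambda>i xs. if i < n then h i xs else 0)"

lemma Hval_eff: "Hval (eff n h) i S = (if i < n then Hval h i S else 0)"
  by (simp add: Hval_def eff_def)

lemma sum_if_less_min:
  fixes j n :: nat and F :: "nat \<Rightarrow> real"
  shows "(\<Sum>i<j. if i < n then F i else 0) = (\<Sum>i<min j n. F i)"
  by (induction j) (auto simp: min_def)

lemma wealth_eff: "wealth V n h j S = V + (\<Sum>i<j. Hval (eff n h) i S * (S (Suc i) - S i))"
proof -
  have "(\<Sum>i<j. Hval (eff n h) i S * (S (Suc i) - S i))
      = (\<Sum>i<j. if i < n then Hval h i S * (S (Suc i) - S i) else 0)"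
    by (rule sum.cong) (auto simp: Hval_eff)
  also have "\<dots> = (\<Sum>i<min j n. Hval h i S * (S (Suc i) - S i))"
    by (rule sum_if_less_min)
  finally show ?thesis by (simp add: wealth_def)
qed

lemma wealth_Suc: "wealth V n h (Suc j) S = wealth V n h j S + Hval (eff n h) j S * (S (Suc j) - S j)"
  by (simp add: wealth_eff)

lemma wealth_0[simp]: "wealth V n h 0 S = V"
  by (simp add: wealth_def)

lemma wealth_ge: "n \<le> j \<Longrightarrow> wealth V n h j S = wealth_inf V n h S"
  by (simp add: wealth_def wealth_inf_def min_def)

lemma wealth_add: "wealth V n h (j + m) S = wealth V n h j S + (\<Sum>i<m. Hval (eff n h) (j+i) S * (S (Suc (j+i)) - S (j+i)))"
  by (induction m) (simp_all add: wealth_Suc)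

lemma map_upt_prefix: "(\<forall>k\<le>i. S k = S' k) \<Longrightarrow> map S [0..<Suc i] = map S' [0..<Suc i]"
  by (auto simp: map_eq_conv simp del: upt_Suc)

lemma Hval_prefix: "(\<forall>k\<le>i. S k = S' k) \<Longrightarrow> Hval h i S = Hval h i S'"
  unfolding Hval_def by (simp only: map_upt_prefix)

lemma wealth_prefix: "(\<forall>k\<le>j. S k = S' k) \<Longrightarrow> wealth V n h j S = wealth V n h j S'"
  unfolding wealth_eff
  by (intro arg_cong[where f="\<lambda>x. V + x"] sum.cong refl) (auto simp: Hval_prefix[of _ S S'])

lemma map_upt_shift: "map f [j..<j+m] = map (\<lambda>k. f (j+k)) [0..<m]"
  by (induction m) auto

definition cont :: "nat \<Rightarrow> strategy \<Rightarrow> nat \<Rightarrow> traj \<Rightarrow> strategy" where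
  "cont n h j S = (\<lambda>i xs. eff n h (j+i) (map S [0..<j] @ xs))"

lemma Hval_cont:
  assumes "\<forall>k\<le>j. S3 k = S k"
  shows "Hval (cont n h j S) i (\<lambda>i. S3 (j+i)) = Hval (eff n h) (j+i) S3"
proof -
  have "map S [0..<j] = map S3 [0..<j]" using assms by (simp add: map_eq_conv)
  moreover have "[0..<Suc (j+i)] = [0..<j] @ [j..<j + Suc i]"
    using upt_add_eq_append[of 0 j "Suc i"] by simp
  ultimately have "map S [0..<j] @ map (\<lambda>i. S3 (j+i)) [0..<Suc i] = map S3 [0..<Suc (j+i)]"
    using map_upt_shift[of S3 j "Suc i"] by simp
  then show ?thesis by (simp add: Hval_def cont_def del: upt_Suc)
qed

lemma eff_cont: "eff n (cont n h j S) = cont n h j S"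
  by (auto simp: eff_def cont_def fun_eq_iff)

lemma wealth_inf_cont:
  assumes "\<forall>k\<le>j. S3 k = S k"
  shows "wealth_inf (wealth V n h j S) n (cont n h j S) (\<lambda>i. S3 (j+i)) = wealth_inf V n h S3"
proof -
  have 1: "wealth_inf (wealth V n h j S) n (cont n h j S) (\<lambda>i. S3 (j+i))
     = wealth V n h j S + (\<Sum>i<n. Hval (eff n h) (j+i) S3 * (S3 (Suc (j+i)) - S3 (j+i)))"
    unfolding wealth_inf_def wealth_eff[of "wealth V n h j S" n "cont n h j S" n] eff_cont
    by (intro arg_cong[where f="\<lambda>x. wealth V n h j S + x"] sum.cong refl)
       (simp add: Hval_cont[OF assms])
  have 2: "wealth V n h j S = wealth V n h j S3"
    using assms by (intro wealth_prefix) auto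
  have 3: "wealth V n h j S3 + (\<Sum>i<n. Hval (eff n h) (j+i) S3 * (S3 (Suc (j+i)) - S3 (j+i)))
      = wealth V n h (j+n) S3" by (simp add: wealth_add)
  have 4: "wealth V n h (j+n) S3 = wealth_inf V n h S3" by (simp add: wealth_ge)
  show ?thesis using 1 2 3 4 by simp
qed

lemma shifted_shifted:
  assumes "S \<in> shifted_cond_space T S0 j0"
  shows "\<exists>S1\<in>T. shifted_cond_space (shifted_cond_space T S0 j0) S j = shifted_cond_space T S1 (j0 + j)"
proof -
  from assms obtain S1 where S1: "S1 \<in> T" "\<forall>k\<le>j0. S1 k = S0 k" and S: "S = (\<lambda>i. S1 (j0+i))"
    by (auto simp: shifted_cond_space_def cond_space_def)
  have "shifted_cond_space (shifted_cond_space T S0 j0) S j = shifted_cond_space T S1 (j0 + j)"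
  proof (rule set_eqI, rule iffI)
    fix X assume "X \<in> shifted_cond_space (shifted_cond_space T S0 j0) S j"
    then obtain S' where S': "S' \<in> shifted_cond_space T S0 j0" "\<forall>k\<le>j. S' k = S k" and X: "X = (\<lambda>i. S' (j+i))"
      by (auto simp: shifted_cond_space_def cond_space_def)
    from S'(1) obtain S2 where S2: "S2 \<in> T" "\<forall>k\<le>j0. S2 k = S0 k" and S'': "S' = (\<lambda>i. S2 (j0+i))"
      by (auto simp: shifted_cond_space_def cond_space_def)
    have agree: "\<forall>k\<le>j0+j. S2 k = S1 k"
    proof (intro allI impI)
      fix k assume k: "k \<le> j0 + j"
      show "S2 k = S1 k"
      proof (cases "k \<le> j0")
        case True then show ?thesis using S1 S2 by simp
      next
        case False
        define d where "d = k - j0"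
        have d: "k = j0 + d" "d \<le> j" using k False unfolding d_def by auto
        have "S' d = S d" using S'(2) d by simp
        then show ?thesis using d S S'' by simp
      qed
    qed
    have "X = (\<lambda>i. S2 ((j0 + j) + i))" using X S'' by (simp add: add.assoc)
    then show "X \<in> shifted_cond_space T S1 (j0 + j)"
      using S2 agree by (auto simp: shifted_cond_space_def cond_space_def)
  next
    fix X assume "X \<in> shifted_cond_space T S1 (j0 + j)"
    then obtain S2 where S2: "S2 \<in> T" "\<forall>k\<le>j0+j. S2 k = S1 k" and X: "X = (\<lambda>i. S2 ((j0+j)+i))"
      by (auto simp: shifted_cond_space_def cond_space_def)
    have a0: "\<forall>k\<le>j0. S2 k = S0 k" using S1 S2 by simp
    define S' where "S' = (\<lambda>i. S2 (j0+i))"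
    have "S' \<in> shifted_cond_space T S0 j0"
      using S2 a0 unfolding S'_def shifted_cond_space_def cond_space_def by auto
    moreover have "\<forall>k\<le>j. S' k = S k" using S2 S unfolding S'_def by simp
    moreover have "X = (\<lambda>i. S' (j+i))" using X unfolding S'_def by (simp add: add.assoc)
    ultimately have "S' \<in> cond_space (shifted_cond_space T S0 j0) S j" "X = (\<lambda>i. S' (j+i))"
      unfolding cond_space_def by simp_all
    then show "X \<in> shifted_cond_space (shifted_cond_space T S0 j0) S j"
      using \<open>X = (\<lambda>i. S' (j+i))\<close> unfolding shifted_cond_space_def[of "shifted_cond_space T S0 j0"] by (intro image_eqI[where x=S']) simp_all
  qed
  with S1 show ?thesis by blast
qed



definition zh :: strategy where "zh = (\<lambda>_ _. 0)"

lemma wealth_zh[simp]: "wealth V n zh j S = V"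
  by (simp add: wealth_def Hval_def zh_def)

lemma wealth_inf_zh[simp]: "wealth_inf V n zh S = V"
  by (simp add: wealth_inf_def)

lemma suminf_ereal_0[simp]: "(\<Sum>m. ereal 0) = 0"
  by (metis suminf_zero zero_ereal_def)

lemma NL_gen:
  assumes nL: "\<forall>S\<in>T. \<forall>j. barsigma (shifted_cond_space T S j) (\<lambda>_. 0) \<ge> 0"
    and S0: "S0 \<in> T" and U: "U = shifted_cond_space T S0 j0"
    and nW: "1 \<le> nW" and nm: "\<forall>m. 1 \<le> nm m"
    and posV: "\<forall>m. \<forall>S\<in>U. \<forall>j. 0 \<le> wealth (Vm m) (nm m) (hm m) j S"
    and sup: "\<forall>S\<in>U. 0 \<le> ereal (wealth_inf VW nW hW S) + (\<Sum>m. ereal (wealth_inf (Vm m) (nm m) (hm m) S))"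
    and S: "S \<in> U"
  shows "0 \<le> ereal (wealth VW nW hW j S) + (\<Sum>m. ereal (wealth (Vm m) (nm m) (hm m) j S))"
proof (rule ccontr)
  assume neg: "\<not> ?thesis"
  obtain S1 where S1: "S1 \<in> T" and U'eq: "shifted_cond_space U S j = shifted_cond_space T S1 (j0 + j)"
    using shifted_shifted[of S T S0 j0 j] S U by auto
  define U' where "U' = shifted_cond_space U S j"
  define P' :: "nat \<Rightarrow> simple_pf" where "P' = (\<lambda>m. case m of 0 \<Rightarrow> (wealth VW nW hW j S, nW, cont nW hW j S)
     | Suc k \<Rightarrow> (wealth (Vm k) (nm k) (hm k) j S, nm k, cont (nm k) (hm k) j S))"
  have memU': "\<exists>S3\<in>U. (\<forall>k\<le>j. S3 k = S k) \<and> S' = (\<lambda>i. S3 (j+i))" if "S' \<in> U'" for S'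
    using that unfolding U'_def shifted_cond_space_def cond_space_def by auto
  have gen: "gen_portfolio U' P'"
    unfolding gen_portfolio_def
  proof (intro conjI allI impI)
    show "simple_portfolio (P' 0)" using nW by (simp add: P'_def simple_portfolio_def)
    fix m :: nat assume "1 \<le> m"
    then obtain k where k: "m = Suc k" by (cases m) auto
    have "wealth_inf (wealth (Vm k) (nm k) (hm k) j S) (nm k) (cont (nm k) (hm k) j S) S' \<ge> 0"
      if S'U: "S' \<in> U'" for S'
    proof -
      obtain S3 where S3: "S3 \<in> U" "\<forall>k\<le>j. S3 k = S k" "S' = (\<lambda>i. S3 (j+i))" using memU'[OF S'U] by blast
      have "wealth_inf (wealth (Vm k) (nm k) (hm k) j S) (nm k) (cont (nm k) (hm k) j S) S' = wealth_inf (Vm k) (nm k) (hm k) S3"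
        using wealth_inf_cont[OF S3(2)] S3(3) by simp
      also have "\<dots> \<ge> 0" using posV S3(1) by (simp add: wealth_inf_def)
      finally show ?thesis .
    qed
    then show "positive_simple U' (P' m)"
      unfolding positive_simple_def simple_portfolio_def k P'_def
      using nm posV S by simp
  qed
  have sh: "superhedges U' (\<lambda>_. 0) P'"
    unfolding superhedges_def
  proof
    fix S' assume "S' \<in> U'"
    then obtain S3 where S3: "S3 \<in> U" "\<forall>k\<le>j. S3 k = S k" "S' = (\<lambda>i. S3 (j+i))" using memU'[OF \<open>S' \<in> U'\<close>] by blast
    have "gen_wealth P' S' = ereal (wealth_inf VW nW hW S3) + (\<Sum>m. ereal (wealth_inf (Vm m) (nm m) (hm m) S3))"
      unfolding gen_wealth_def P'_def using wealth_inf_cont[OF S3(2)] S3(3) by simp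
    then show "0 \<le> gen_wealth P' S'" using sup S3(1) by simp
  qed
  have "barsigma U' (\<lambda>_. 0) \<le> endowment P'"
    unfolding barsigma_def using gen sh by (intro Inf_lower) blast
  also have "endowment P' = ereal (wealth VW nW hW j S) + (\<Sum>m. ereal (wealth (Vm m) (nm m) (hm m) j S))"
    unfolding endowment_def P'_def by simp
  also have "\<dots> < 0" using neg by simp
  finally have "barsigma U' (\<lambda>_. 0) < 0" .
  moreover have "barsigma U' (\<lambda>_. 0) \<ge> 0" using nL S1 U'eq unfolding U'_def by simp
  ultimately show False by simp
qed

lemma pos_inter:
  assumes nL: "\<forall>S\<in>T. \<forall>j. barsigma (shifted_cond_space T S j) (\<lambda>_. 0) \<ge> 0"
    and S0: "S0 \<in> T" and U: "U = shifted_cond_space T S0 j0"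
    and P: "positive_simple U (V, n, h)" and S: "S \<in> U"
  shows "0 \<le> wealth V n h j S"
proof -
  have "0 \<le> ereal (wealth V n h j S) + (\<Sum>m. ereal (wealth 0 1 zh j S))"
    using NL_gen[OF nL S0 U, of n "\<lambda>_. 1" "\<lambda>_. 0" "\<lambda>_. zh" V h S j] P S
    by (simp add: positive_simple_def simple_portfolio_def)
  then show ?thesis by simp
qed

lemma NL_pos:
  assumes nL: "\<forall>S\<in>T. \<forall>j. barsigma (shifted_cond_space T S j) (\<lambda>_. 0) \<ge> 0"
    and S0: "S0 \<in> T" and U: "U = shifted_cond_space T S0 j0"
    and nW: "1 \<le> nW"
    and pos: "\<forall>m. positive_simple U (Vm m, nm m, hm m)"
    and sup: "\<forall>S\<in>U. 0 \<le> ereal (wealth_inf VW nW hW S) + (\<Sum>m. ereal (wealth_inf (Vm m) (nm m) (hm m) S))"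
    and S: "S \<in> U"
  shows "0 \<le> ereal (wealth VW nW hW j S) + (\<Sum>m. ereal (wealth (Vm m) (nm m) (hm m) j S))"
proof (rule NL_gen[OF nL S0 U nW _ _ sup S])
  show "\<forall>m. 1 \<le> nm m" using pos by (simp add: positive_simple_def simple_portfolio_def)
  show "\<forall>m. \<forall>S\<in>U. \<forall>j. 0 \<le> wealth (Vm m) (nm m) (hm m) j S"
    using pos_inter[OF nL S0 U] pos by blast
qed

definition addh :: "nat \<Rightarrow> strategy \<Rightarrow> nat \<Rightarrow> strategy \<Rightarrow> strategy" where
  "addh n1 h1 n2 h2 = (\<lambda>i xs. eff n1 h1 i xs + eff n2 h2 i xs)"

definition negh :: "strategy \<Rightarrow> strategy" where
  "negh h = (\<lambda>i xs. - h i xs)"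

lemma wealth_addh:
  "wealth (V1 + V2) (max n1 n2) (addh n1 h1 n2 h2) j S = wealth V1 n1 h1 j S + wealth V2 n2 h2 j S"
proof -
  have "Hval (eff (max n1 n2) (addh n1 h1 n2 h2)) i S = Hval (eff n1 h1) i S + Hval (eff n2 h2) i S" for i
    by (simp add: Hval_def eff_def addh_def less_max_iff_disj)
  then show ?thesis unfolding wealth_eff by (simp add: distrib_right sum.distrib add_ac)
qed

lemma wealth_inf_addh:
  "wealth_inf (V1 + V2) (max n1 n2) (addh n1 h1 n2 h2) S = wealth_inf V1 n1 h1 S + wealth_inf V2 n2 h2 S"
  unfolding wealth_inf_def wealth_addh by (simp add: wealth_ge wealth_inf_def[symmetric])

lemma wealth_negh: "wealth (- V) n (negh h) j S = - wealth V n h j S"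
  unfolding wealth_def Hval_def negh_def by (simp add: sum_negf)

lemma wealth_inf_negh: "wealth_inf (- V) n (negh h) S = - wealth_inf V n h S"
  unfolding wealth_inf_def by (rule wealth_negh)

lemma wealth_inf_diff:
  "wealth_inf (V1 - V2) (max n1 n2) (addh n1 h1 n2 (negh h2)) S = wealth_inf V1 n1 h1 S - wealth_inf V2 n2 h2 S"
  using wealth_inf_addh[of V1 "- V2" n1 n2 h1 "negh h2" S] wealth_inf_negh[of V2 n2 h2 S] by simp

lemma wealth_diff:
  "wealth (V1 - V2) (max n1 n2) (addh n1 h1 n2 (negh h2)) j S = wealth V1 n1 h1 j S - wealth V2 n2 h2 j S"
  using wealth_addh[of V1 "- V2" n1 n2 h1 "negh h2" j S] wealth_negh[of V2 n2 h2 j S] by simp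

lemma LOP_shifted:
  assumes nL: "\<forall>S\<in>T. \<forall>j. barsigma (shifted_cond_space T S j) (\<lambda>_. 0) \<ge> 0"
    and S0: "S0 \<in> T" and U: "U = shifted_cond_space T S0 j0"
  shows "LOP U"
proof -
  have ne: "(\<lambda>i. S0 (j0 + i)) \<in> U" unfolding U shifted_cond_space_def cond_space_def using S0 by auto
  have half: "V2 \<le> V1" if s1: "1 \<le> n1" and s2: "1 \<le> n2"
     and eq: "\<forall>S\<in>U. wealth_inf V1 n1 h1 S = wealth_inf V2 n2 h2 S" for V1 n1 h1 V2 n2 h2
  proof -
    have "0 \<le> ereal (wealth (V1 - V2) (max n1 n2) (addh n1 h1 n2 (negh h2)) 0 (\<lambda>i. S0 (j0 + i)))
       + (\<Sum>m. ereal (wealth 0 1 zh 0 (\<lambda>i. S0 (j0 + i))))"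
    proof (rule NL_pos[OF nL S0 U _ _ _ ne])
      show "1 \<le> max n1 n2" using s1 by simp
      show "\<forall>m. positive_simple U (0, 1, zh)" by (simp add: positive_simple_def simple_portfolio_def)
      show "\<forall>S\<in>U. 0 \<le> ereal (wealth_inf (V1 - V2) (max n1 n2) (addh n1 h1 n2 (negh h2)) S) +
          (\<Sum>m. ereal (wealth_inf 0 1 zh S))"
        using eq by (simp add: wealth_inf_diff)
    qed
    then show ?thesis by simp
  qed
  show ?thesis unfolding LOP_def simple_portfolio_def
    using half by (metis fst_conv snd_conv order_antisym)
qed



definition lpath :: "real list \<Rightarrow> traj" where
  "lpath xs = (\<lambda>k. if k < length xs then xs ! k else 0)"

lemma lpath_map: "\<forall>k\<le>i. lpath (map S [0..<Suc i]) k = S k"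
  by (auto simp: lpath_def simp del: upt_Suc)

lemma nonneg_not_summable_ereal: "(\<And>i. 0 \<le> f i) \<Longrightarrow> \<not> summable f \<Longrightarrow> (\<Sum>i. ereal (f i)) = \<infinity>"
  using summable_ereal by blast

locale qcons =
  fixes U :: "traj set" and N :: nat and a0 :: real and hR :: strategy
    and Vm :: "nat \<Rightarrow> real" and hm :: "nat \<Rightarrow> strategy" and kap :: real
  assumes N1: "1 \<le> N" and kpos: "0 < kap"
    and Vpos: "\<And>m. 0 \<le> Vm m" and Vsum: "summable Vm" and Epos: "0 < suminf Vm"
    and Z0: "kap \<le> a0 + suminf Vm"
    and pos: "\<And>m S j. S \<in> U \<Longrightarrow> 0 \<le> wealth (Vm m) N (hm m) j S"
    and Zk: "\<And>S j. S \<in> U \<Longrightarrow> j \<le> N \<Longrightarrow>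
       ereal kap \<le> ereal (wealth a0 N hR j S) + (\<Sum>m. ereal (wealth (Vm m) N (hm m) j S))"
begin

definition lam0 :: real where "lam0 = (a0 + suminf Vm) / suminf Vm"
definition q0 :: "nat \<Rightarrow> real" where "q0 m = Vm m * lam0"
definition Dn :: "nat \<Rightarrow> traj \<Rightarrow> real set" where
  "Dn j S = {S' (Suc j) - S j | S'. S' \<in> U \<and> (\<forall>k\<le>j. S' k = S k)}"
definition gm :: "nat \<Rightarrow> nat \<Rightarrow> traj \<Rightarrow> real" where "gm m j S = Hval (eff N (hm m)) j S"
definition hr :: "nat \<Rightarrow> traj \<Rightarrow> real" where "hr j S = Hval (eff N hR) j S"
definition pm :: "nat \<Rightarrow> nat \<Rightarrow> traj \<Rightarrow> real" where "pm m j S = wealth (Vm m) N (hm m) j S"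
definition ar :: "nat \<Rightarrow> traj \<Rightarrow> real" where "ar j S = wealth a0 N hR j S"

definition tq :: "(nat \<Rightarrow> real) \<Rightarrow> nat \<Rightarrow> traj \<Rightarrow> nat \<Rightarrow> real" where
  "tq q j S m = (if \<not> summable q then 0
     else if summable (\<lambda>m. \<bar>gm m j S\<bar>) then q m * ((suminf (\<lambda>m. gm m j S) + hr j S) / suminf q)
     else if (\<forall>y\<in>Dn j S. 0 \<le> y) then max (gm m j S) 0 else min (gm m j S) 0)"

primrec qv :: "nat \<Rightarrow> traj \<Rightarrow> nat \<Rightarrow> real" where
  "qv 0 S = q0"
| "qv (Suc j) S = (\<lambda>m. qv j S m + tq (qv j S) j S m * (S (Suc j) - S j))"

lemma Dn_prefix: "\<forall>k\<le>j. S k = S' k \<Longrightarrow> Dn j S = Dn j S'"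
proof -
  assume a: "\<forall>k\<le>j. S k = S' k"
  have "(\<forall>k\<le>j. S'' k = S k) = (\<forall>k\<le>j. S'' k = S' k)" for S'' using a by auto
  moreover have "S j = S' j" using a by simp
  ultimately show ?thesis unfolding Dn_def by simp
qed

lemma tq_prefix: "\<forall>k\<le>j. S k = S' k \<Longrightarrow> tq q j S m = tq q j S' m"
proof -
  assume a: "\<forall>k\<le>j. S k = S' k"
  have "gm m' j S = gm m' j S'" for m' unfolding gm_def using a by (rule Hval_prefix)
  moreover have "hr j S = hr j S'" unfolding hr_def using a by (rule Hval_prefix)
  moreover have "Dn j S = Dn j S'" using a by (rule Dn_prefix)
  ultimately show ?thesis unfolding tq_def by simp
qed

lemma qv_prefix: "\<forall>k\<le>j. S k = S' k \<Longrightarrow> qv j S = qv j S'"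
proof (induction j)
  case 0 then show ?case by simp
next
  case (Suc j)
  then have IH: "qv j S = qv j S'" by simp
  have t: "tq (qv j S') j S m = tq (qv j S') j S' m" for m using Suc.prems by (intro tq_prefix) simp
  moreover have "S (Suc j) = S' (Suc j)" "S j = S' j" using Suc.prems by auto
  ultimately show ?case unfolding qv.simps IH by simp
qed

definition hq :: "nat \<Rightarrow> strategy" where
  "hq m = (\<lambda>i xs. tq (qv i (lpath xs)) i (lpath xs) m)"

lemma Hval_hq: "Hval (hq m) i S = tq (qv i S) i S m"
proof -
  have a: "\<forall>k\<le>i. lpath (map S [0..<Suc i]) k = S k" by (rule lpath_map)
  have "qv i (lpath (map S [0..<Suc i])) = qv i S" using a by (rule qv_prefix)
  moreover have "tq (qv i S) i (lpath (map S [0..<Suc i])) m = tq (qv i S) i S m"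
    using a by (rule tq_prefix)
  ultimately show ?thesis by (simp add: Hval_def hq_def del: upt_Suc)
qed

lemma wealth_hq: "j \<le> N \<Longrightarrow> wealth (q0 m) N (hq m) j S = qv j S m"
proof (induction j)
  case 0 then show ?case by simp
next
  case (Suc j)
  then have "j < N" by simp
  then show ?case using Suc by (simp add: wealth_Suc Hval_eff Hval_hq)
qed

lemma pm_Suc: "pm m (Suc j) S = pm m j S + gm m j S * (S (Suc j) - S j)"
  by (simp add: pm_def gm_def wealth_Suc)

lemma ar_Suc: "ar (Suc j) S = ar j S + hr j S * (S (Suc j) - S j)"
  by (simp add: ar_def hr_def wealth_Suc)

lemma pm_nonneg: "S \<in> U \<Longrightarrow> 0 \<le> pm m j S"
  unfolding pm_def by (rule pos)

lemma Dn_self: "S \<in> U \<Longrightarrow> S (Suc j) - S j \<in> Dn j S"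
  unfolding Dn_def by blast

lemma Dn_pos:
  assumes S: "S \<in> U" and y: "y \<in> Dn j S"
  shows "0 \<le> pm m j S + gm m j S * y"
proof -
  obtain S' where S': "S' \<in> U" "\<forall>k\<le>j. S' k = S k" and yy: "y = S' (Suc j) - S j"
    using y unfolding Dn_def by blast
  have "0 \<le> pm m (Suc j) S'" using S'(1) by (rule pm_nonneg)
  also have "pm m (Suc j) S' = pm m j S' + gm m j S' * (S' (Suc j) - S' j)" by (rule pm_Suc)
  also have "pm m j S' = pm m j S" unfolding pm_def using S'(2) by (intro wealth_prefix) simp
  also have "gm m j S' = gm m j S" unfolding gm_def using S'(2) by (intro Hval_prefix) simp
  also have "S' j = S j" using S'(2) by simp
  finally show ?thesis using yy by simp
qed

lemma Zk_real:
  assumes "S \<in> U" "j \<le> N" "summable (\<lambda>m. pm m j S)"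
  shows "kap \<le> ar j S + suminf (\<lambda>m. pm m j S)"
proof -
  have "ereal kap \<le> ereal (ar j S) + (\<Sum>m. ereal (pm m j S))"
    using Zk[OF assms(1,2)] by (simp add: ar_def pm_def)
  also have "(\<Sum>m. ereal (pm m j S)) = ereal (suminf (\<lambda>m. pm m j S))"
    using assms(3) by (rule suminf_ereal')
  finally show ?thesis by simp
qed

definition inv :: "nat \<Rightarrow> traj \<Rightarrow> bool" where
  "inv j S \<longleftrightarrow> (\<forall>m. 0 \<le> qv j S m) \<and> (summable (qv j S) \<longrightarrow>
     summable (\<lambda>m. pm m j S) \<and> suminf (qv j S) = ar j S + suminf (\<lambda>m. pm m j S))"

lemma lam0_pos: "0 < lam0"
  unfolding lam0_def using Z0 kpos Epos by simp

lemma inv_0: "inv 0 S"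
proof -
  have "pm m 0 S = Vm m" for m by (simp add: pm_def)
  moreover have "ar 0 S = a0" by (simp add: ar_def)
  moreover have "summable q0" unfolding q0_def using Vsum by (rule summable_mult2)
  moreover have "suminf q0 = a0 + suminf Vm"
    unfolding q0_def using suminf_mult2[OF Vsum, of lam0] Epos by (simp add: lam0_def)
  moreover have "0 \<le> q0 m" for m unfolding q0_def using Vpos lam0_pos by simp
  ultimately show ?thesis unfolding inv_def using Vsum by simp
qed

end



context qcons begin

lemma inv_Suc:
  assumes S: "S \<in> U" and jN: "j < N" and I: "inv j S"
  shows "inv (Suc j) S"
proof -
  let ?q = "qv j S" and ?y = "S (Suc j) - S j"
  have nonneg: "\<And>m. 0 \<le> ?q m" and impl: "summable ?q \<Longrightarrow> summable (\<lambda>m. pm m j S) \<and> suminf ?q = ar j S + suminf (\<lambda>m. pm m j S)"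
    using I unfolding inv_def by auto
  have qS: "qv (Suc j) S = (\<lambda>m. ?q m + tq ?q j S m * ?y)" by simp
  show ?thesis
  proof (cases "summable ?q")
    case False
    then have "qv (Suc j) S = ?q" by (simp add: tq_def)
    then show ?thesis using False nonneg by (simp add: inv_def)
  next
    case sq: True
    with impl have sp: "summable (\<lambda>m. pm m j S)" and eq: "suminf ?q = ar j S + suminf (\<lambda>m. pm m j S)"
      by auto
    have "kap \<le> suminf ?q" using Zk_real[OF S _ sp] jN eq by simp
    then have Qpos: "0 < suminf ?q" using kpos by simp
    show ?thesis
    proof (cases "summable (\<lambda>m. \<bar>gm m j S\<bar>)")
      case sg: True
      define G where "G = suminf (\<lambda>m. gm m j S)"
      define tau where "tau = (G + hr j S) / suminf ?q"
      have sg': "summable (\<lambda>m. gm m j S)" using sg by (rule summable_rabs_cancel)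
      have tq_eq: "tq ?q j S m = ?q m * tau" for m by (simp add: tq_def sq sg tau_def G_def)
      have new: "qv (Suc j) S = (\<lambda>m. ?q m * (1 + tau * ?y))"
        by (simp add: tq_eq algebra_simps)
      have pS: "(\<lambda>m. pm m (Suc j) S) = (\<lambda>m. pm m j S + gm m j S * ?y)"
        by (simp add: pm_Suc)
      have sp': "summable (\<lambda>m. pm m (Suc j) S)"
        unfolding pS by (intro summable_add sp summable_mult2 sg')
      have sum_p': "suminf (\<lambda>m. pm m (Suc j) S) = suminf (\<lambda>m. pm m j S) + G * ?y"
        unfolding pS G_def using suminf_add[OF sp summable_mult2[OF sg', of ?y]] suminf_mult2[OF sg', of ?y]
        by simp
      have "kap \<le> ar (Suc j) S + suminf (\<lambda>m. pm m (Suc j) S)"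
        using Zk_real[OF S _ sp'] jN by simp
      then have k2: "kap \<le> suminf ?q + (G + hr j S) * ?y"
        using sum_p' eq by (simp add: ar_Suc algebra_simps)
      have taueq: "tau * suminf ?q = G + hr j S" unfolding tau_def using Qpos by simp
      have alg: "suminf ?q * (1 + tau * ?y) = suminf ?q + (G + hr j S) * ?y"
      proof -
        have "suminf ?q * (1 + tau * ?y) = suminf ?q + (tau * suminf ?q) * ?y" by (simp add: algebra_simps)
        then show ?thesis using taueq by simp
      qed
      then have "0 < suminf ?q * (1 + tau * ?y)" using k2 kpos by simp
      then have pos1: "0 < 1 + tau * ?y" using Qpos by (simp add: zero_less_mult_iff)
      have nn: "0 \<le> qv (Suc j) S m" for m unfolding new using nonneg pos1 by simp
      have snew: "summable (qv (Suc j) S)" unfolding new using sq by (rule summable_mult2)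
      have "suminf (qv (Suc j) S) = suminf ?q * (1 + tau * ?y)"
        unfolding new using suminf_mult2[OF sq] by simp
      also have "\<dots> = suminf ?q + (G + hr j S) * ?y"
        by (rule alg)
      also have "\<dots> = ar (Suc j) S + suminf (\<lambda>m. pm m (Suc j) S)"
        using eq sum_p' by (simp add: ar_Suc algebra_simps)
      finally show ?thesis unfolding inv_def using nn sp' by simp
    next
      case nsg: False
      have bnd: "\<And>m y'. y' \<in> Dn j S \<Longrightarrow> 0 \<le> pm m j S + gm m j S * y'"
        using Dn_pos[OF S] by blast
      have ysel: "?y \<in> Dn j S" using S by (rule Dn_self)
      have onesided: "(\<forall>y'\<in>Dn j S. 0 \<le> y') \<or> (\<forall>y'\<in>Dn j S. y' \<le> 0)"
      proof (rule ccontr)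
        assume "\<not> ?thesis"
        then obtain y1 y2 where y1: "y1 \<in> Dn j S" "y1 < 0" and y2: "y2 \<in> Dn j S" "0 < y2"
          by (auto simp: not_le)
        have "\<bar>gm m j S\<bar> \<le> pm m j S * (1 / y2 + 1 / (- y1))" for m
        proof -
          have p0: "0 \<le> pm m j S" using S by (rule pm_nonneg)
          have b1: "0 \<le> pm m j S + gm m j S * y1" using bnd y1(1) by blast
          have b2: "0 \<le> pm m j S + gm m j S * y2" using bnd y2(1) by blast
          have u: "gm m j S \<le> pm m j S / (- y1)" using b1 y1(2) by (simp add: field_simps)
          have l: "- gm m j S \<le> pm m j S / y2" using b2 y2(2) by (simp add: field_simps)
          have "pm m j S / (- y1) \<le> pm m j S * (1 / y2 + 1 / (- y1))"
            using p0 y2(2) by (simp add: field_simps)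
          moreover have "pm m j S / y2 \<le> pm m j S * (1 / y2 + 1 / (- y1))"
            using p0 y1(2) by (simp add: field_simps)
          ultimately show ?thesis using u l by (simp add: abs_le_iff)
        qed
        then have "summable (\<lambda>m. \<bar>gm m j S\<bar>)"
          by (intro summable_comparison_test[OF _ summable_mult2[OF sp]]) auto
        with nsg show False by simp
      qed
      show ?thesis
      proof (cases "\<forall>y'\<in>Dn j S. 0 \<le> y'")
        case up: True
        have tq_eq: "tq ?q j S m = max (gm m j S) 0" for m by (simp add: tq_def sq nsg up)
        have y0: "0 \<le> ?y" using up ysel by blast
        have new: "qv (Suc j) S = (\<lambda>m. ?q m + max (gm m j S) 0 * ?y)" by (simp add: tq_eq)
        have nn: "0 \<le> qv (Suc j) S m" for m unfolding new using nonneg[of m] y0 by simp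
        show ?thesis
        proof (cases "?y = 0")
          case True
          then have "qv (Suc j) S = ?q" "\<And>m. pm m (Suc j) S = pm m j S" "ar (Suc j) S = ar j S"
            by (simp_all add: new pm_Suc ar_Suc)
          then show ?thesis using I by (simp add: inv_def)
        next
          case False
          with y0 have ypos: "0 < ?y" by simp
          have "\<not> summable (qv (Suc j) S)"
          proof
            assume s: "summable (qv (Suc j) S)"
            have "\<bar>gm m j S\<bar> \<le> qv (Suc j) S m / ?y + pm m j S / ?y" for m
            proof -
              have b: "0 \<le> pm m j S + gm m j S * ?y" using bnd ysel by blast
              have "max (gm m j S) 0 * ?y \<le> qv (Suc j) S m" unfolding new using nonneg[of m] by simp
              then have a1: "max (gm m j S) 0 \<le> qv (Suc j) S m / ?y" by (simp only: pos_le_divide_eq ypos)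
              have a2: "- gm m j S \<le> pm m j S / ?y" using b ypos by (simp add: field_simps)
              have "0 \<le> qv (Suc j) S m / ?y" using nn[of m] ypos by simp
              moreover have "0 \<le> pm m j S / ?y" using pm_nonneg[OF S] ypos by simp
              ultimately show ?thesis using a1 a2 by (simp add: abs_le_iff max_def split: if_splits)
            qed
            then have "summable (\<lambda>m. \<bar>gm m j S\<bar>)"
              by (intro summable_comparison_test[OF _ summable_add[OF summable_divide[OF s] summable_divide[OF sp]]]) auto
            with nsg show False by simp
          qed
          then show ?thesis using nn by (simp add: inv_def)
        qed
      next
        case down: False
        with onesided have dn: "\<forall>y'\<in>Dn j S. y' \<le> 0" by simp
        have tq_eq: "tq ?q j S m = min (gm m j S) 0" for m by (simp add: tq_def sq nsg down)
        have y0: "?y \<le> 0" using dn ysel by blast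
        have new: "qv (Suc j) S = (\<lambda>m. ?q m + min (gm m j S) 0 * ?y)" by (simp add: tq_eq)
        have nn: "0 \<le> qv (Suc j) S m" for m
        proof -
          have "0 \<le> min (gm m j S) 0 * ?y" using y0 by (intro mult_nonpos_nonpos) auto
          then show ?thesis unfolding new using nonneg[of m] by simp
        qed
        show ?thesis
        proof (cases "?y = 0")
          case True
          then have "qv (Suc j) S = ?q" "\<And>m. pm m (Suc j) S = pm m j S" "ar (Suc j) S = ar j S"
            by (simp_all add: new pm_Suc ar_Suc)
          then show ?thesis using I by (simp add: inv_def)
        next
          case False
          with y0 have yneg: "0 < - ?y" by simp
          have "\<not> summable (qv (Suc j) S)"
          proof
            assume s: "summable (qv (Suc j) S)"
            have "\<bar>gm m j S\<bar> \<le> qv (Suc j) S m / (- ?y) + pm m j S / (- ?y)" for m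
            proof -
              have b: "0 \<le> pm m j S + gm m j S * ?y" using bnd ysel by blast
              have "min (gm m j S) 0 * ?y \<le> qv (Suc j) S m" unfolding new using nonneg[of m] by simp
              then have a1: "- min (gm m j S) 0 \<le> qv (Suc j) S m / (- ?y)" by (simp only: pos_le_divide_eq yneg mult_minus_left mult_minus_right minus_minus)
              have a2: "gm m j S \<le> pm m j S / (- ?y)" using b yneg by (simp add: field_simps)
              have "0 \<le> qv (Suc j) S m / (- ?y)" using nn[of m] yneg by simp
              moreover have "0 \<le> pm m j S / (- ?y)" using pm_nonneg[OF S] yneg by simp
              ultimately show ?thesis using a1 a2 by (simp add: abs_le_iff min_def split: if_splits)
            qed
            then have "summable (\<lambda>m. \<bar>gm m j S\<bar>)"
              by (intro summable_comparison_test[OF _ summable_add[OF summable_divide[OF s] summable_divide[OF sp]]]) auto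
            with nsg show False by simp
          qed
          then show ?thesis using nn by (simp add: inv_def)
        qed
      qed
    qed
  qed
qed

lemma inv_all: "S \<in> U \<Longrightarrow> j \<le> N \<Longrightarrow> inv j S"
proof (induction j)
  case 0 show ?case by (rule inv_0)
next
  case (Suc j) then show ?case using inv_Suc by simp
qed

lemma qv_final:
  assumes S: "S \<in> U"
  shows "ereal (ar N S) + (\<Sum>m. ereal (pm m N S)) \<le> (\<Sum>m. ereal (qv N S m))"
proof -
  have I: "inv N S" using S by (intro inv_all) simp_all
  then have nn: "\<And>m. 0 \<le> qv N S m" unfolding inv_def by simp
  show ?thesis
  proof (cases "summable (qv N S)")
    case True
    with I have sp: "summable (\<lambda>m. pm m N S)" and eq: "suminf (qv N S) = ar N S + suminf (\<lambda>m. pm m N S)"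
      unfolding inv_def by auto
    have "(\<Sum>m. ereal (qv N S m)) = ereal (ar N S + suminf (\<lambda>m. pm m N S))"
      using suminf_ereal'[OF True] eq by simp
    also have "\<dots> = ereal (ar N S) + (\<Sum>m. ereal (pm m N S))"
      using suminf_ereal'[OF sp] by simp
    finally show ?thesis by simp
  next
    case False
    then have "(\<Sum>m. ereal (qv N S m)) = \<infinity>" using nn by (intro nonneg_not_summable_ereal) auto
    then show ?thesis by simp
  qed
qed

lemma endow_q0: "(\<Sum>m. ereal (q0 m)) = ereal (a0 + suminf Vm)"
proof -
  have "summable q0" unfolding q0_def using Vsum by (rule summable_mult2)
  moreover have "suminf q0 = a0 + suminf Vm"
    unfolding q0_def using suminf_mult2[OF Vsum, of lam0] Epos by (simp add: lam0_def)
  ultimately show ?thesis using suminf_ereal' by metis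
qed

lemma main:
  "\<exists>Q :: nat \<Rightarrow> simple_pf. (\<forall>m. positive_simple U (Q m)) \<and> (\<forall>m. fst (snd (Q m)) = N) \<and>
     (\<Sum>m. ereal (fst (Q m))) = ereal (a0 + suminf Vm) \<and>
     (\<forall>S\<in>U. ereal (wealth_inf a0 N hR S) + (\<Sum>m. ereal (wealth_inf (Vm m) N (hm m) S))
        \<le> (\<Sum>m. ereal (wealth_inf (fst (Q m)) N (snd (snd (Q m))) S)))"
proof (intro exI[of _ "\<lambda>m. (q0 m, N, hq m)"] conjI allI ballI)
  fix m
  have wi: "wealth_inf (q0 m) N (hq m) S = qv N S m" for S
    unfolding wealth_inf_def by (simp add: wealth_hq)
  show "positive_simple U (q0 m, N, hq m)"
    unfolding positive_simple_def simple_portfolio_def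
  proof (simp add: N1[simplified] wi, intro conjI ballI)
    show "0 \<le> q0 m" unfolding q0_def using Vpos[of m] lam0_pos by simp
    fix S assume "S \<in> U"
    then show "0 \<le> qv N S m" using inv_all[of S N] unfolding inv_def by simp
  qed
next
  fix m show "fst (snd (q0 m, N, hq m)) = N" by simp
next
  show "(\<Sum>m. ereal (fst (q0 m, N, hq m))) = ereal (a0 + suminf Vm)" using endow_q0 by simp
next
  fix S assume S: "S \<in> U"
  have wi: "wealth_inf (q0 m) N (hq m) S = qv N S m" for m
    unfolding wealth_inf_def by (simp add: wealth_hq)
  show "ereal (wealth_inf a0 N hR S) + (\<Sum>m. ereal (wealth_inf (Vm m) N (hm m) S))
        \<le> (\<Sum>m. ereal (wealth_inf (fst (q0 m, N, hq m)) N (snd (snd (q0 m, N, hq m))) S))"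
    unfolding fst_conv snd_conv wi using qv_final[OF S] by (simp add: wealth_inf_def ar_def pm_def)
qed

end



lemma wealth_stop: "wealth V n (eff n' h) j S = wealth V n' h (min j n) S"
proof -
  have "(\<Sum>i<j. Hval (eff n (eff n' h)) i S * (S (Suc i) - S i))
      = (\<Sum>i<j. if i < n then Hval (eff n' h) i S * (S (Suc i) - S i) else 0)"
    by (rule sum.cong) (simp_all add: Hval_eff[of n "eff n' h"])
  also have "\<dots> = (\<Sum>i<min j n. Hval (eff n' h) i S * (S (Suc i) - S i))"
    by (rule sum_if_less_min)
  finally show ?thesis unfolding wealth_eff by simp
qed

lemma ereal_suminf_head:
  assumes nn: "\<And>m. 0 \<le> x m"
  shows "(\<Sum>m. ereal (x m)) = ereal (x 0) + (\<Sum>m. ereal (x (Suc m)))"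
proof (cases "summable x")
  case True
  then have s2: "summable (\<lambda>m. x (Suc m))" by (simp add: summable_Suc_iff)
  show ?thesis using suminf_ereal'[OF True] suminf_ereal'[OF s2] suminf_split_head[OF True] by simp
next
  case False
  then have s2: "\<not> summable (\<lambda>m. x (Suc m))" by (simp add: summable_Suc_iff)
  have "(\<Sum>m. ereal (x m)) = \<infinity>" using False nn by (intro nonneg_not_summable_ereal) auto
  moreover have "(\<Sum>m. ereal (x (Suc m))) = \<infinity>" using s2 nn by (intro nonneg_not_summable_ereal) auto
  ultimately show ?thesis by simp
qed

lemma ereal_max_le_aux:
  fixes A :: ereal and c e :: real
  assumes A0: "0 \<le> A" and cA: "0 \<le> ereal c + A" and e0: "0 \<le> e"
  shows "ereal (max c 0) \<le> ereal c + (ereal e + A)"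
proof -
  have "ereal (max c 0) \<le> ereal c + A"
  proof (cases "0 \<le> c")
    case True
    then have "ereal (max c 0) = ereal c + 0" by simp
    also have "\<dots> \<le> ereal c + A" using A0 by (intro add_left_mono)
    finally show ?thesis .
  next
    case False then show ?thesis using cA by (simp add: max_def zero_ereal_def[symmetric])
  qed
  also have "ereal c + A \<le> ereal c + (ereal e + A)"
    using e0 by (intro add_left_mono) (simp add: add_increasing)
  finally show ?thesis .
qed



lemma K_shifted:
  assumes nL: "\<forall>S\<in>T. \<forall>j. barsigma (shifted_cond_space T S j) (\<lambda>_. 0) \<ge> 0"
    and S0: "S0 \<in> T" and U: "U = shifted_cond_space T S0 j0"
  shows "cond_K U"
  unfolding cond_K_def
proof (intro allI impI)
  fix V n h assume "simple_portfolio (V, n, h)"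
  then have n1: "1 \<le> n" by (simp add: simple_portfolio_def)
  define fm :: "traj \<Rightarrow> ereal" where "fm = (\<lambda>S. ereal (max (- wealth_inf V n h S) 0))"
  define fp :: "traj \<Rightarrow> ereal" where "fp = (\<lambda>S. ereal (max (wealth_inf V n h S) 0))"
  have ne: "(\<lambda>i. S0 (j0 + i)) \<in> U" unfolding U shifted_cond_space_def cond_space_def using S0 by auto
  have "ereal V + barI U fm \<le> barI U fp"
    unfolding barI_def[of U fp]
  proof (rule Inf_greatest)
    fix x assume "x \<in> {endowment P |P. pos_gen_portfolio U P \<and> superhedges U fp P}"
    then obtain P where Ppg: "pos_gen_portfolio U P" and Psh: "superhedges U fp P" and x: "x = endowment P"
      by blast
    define Vm' where "Vm' = (\<lambda>k. fst (P (Suc k)))"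
    define nm' where "nm' = (\<lambda>k. fst (snd (P (Suc k))))"
    define hm' where "hm' = (\<lambda>k. snd (snd (P (Suc k))))"
    have Pk: "P (Suc k) = (Vm' k, nm' k, hm' k)" for k by (simp add: Vm'_def nm'_def hm'_def)
    have posP: "\<forall>k. positive_simple U (Vm' k, nm' k, hm' k)"
      using Ppg unfolding pos_gen_portfolio_def gen_portfolio_def by (metis Pk le_add1 plus_1_eq_Suc)
    have Vm'pos: "0 \<le> Vm' k" for k using posP by (simp add: positive_simple_def)
    have P0w: "wealth (fst (P 0)) (fst (snd (P 0))) (snd (snd (P 0))) j S = 0" if "S \<in> U" for j S
      using Ppg that unfolding pos_gen_portfolio_def by blast
    have P00: "fst (P 0) = 0" using P0w[OF ne, of 0] by simp
    have P0inf: "wealth_inf (fst (P 0)) (fst (snd (P 0))) (snd (snd (P 0))) S = 0" if "S \<in> U" for S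
      using P0w[OF that] by (simp add: wealth_inf_def)
    have endP: "endowment P = (\<Sum>k. ereal (Vm' k))" by (simp add: endowment_def P00 Vm'_def)
    have supP: "ereal (max (wealth_inf V n h S) 0) \<le> (\<Sum>k. ereal (wealth_inf (Vm' k) (nm' k) (hm' k) S))"
      if "S \<in> U" for S
    proof -
      have g: "gen_wealth P S = (\<Sum>k. ereal (wealth_inf (Vm' k) (nm' k) (hm' k) S))"
        unfolding gen_wealth_def using P0inf[OF that] by (simp add: Vm'_def nm'_def hm'_def)
      from Psh that have "fp S \<le> gen_wealth P S" unfolding superhedges_def by blast
      then show ?thesis unfolding g fp_def .
    qed
    have NLf: "0 \<le> ereal (- wealth V n h j S) + (\<Sum>k. ereal (wealth (Vm' k) (nm' k) (hm' k) j S))"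
      if "S \<in> U" for j S
    proof -
      have "0 \<le> ereal (wealth (- V) n (negh h) j S) + (\<Sum>k. ereal (wealth (Vm' k) (nm' k) (hm' k) j S))"
      proof (rule NL_pos[OF nL S0 U n1 posP _ that])
        show "\<forall>S\<in>U. 0 \<le> ereal (wealth_inf (- V) n (negh h) S) + (\<Sum>k. ereal (wealth_inf (Vm' k) (nm' k) (hm' k) S))"
        proof
          fix S assume S: "S \<in> U"
          have "0 \<le> ereal (- wealth_inf V n h S + max (wealth_inf V n h S) 0)" by simp
          also have "\<dots> = ereal (- wealth_inf V n h S) + ereal (max (wealth_inf V n h S) 0)"
            by (simp only: plus_ereal.simps)
          also have "\<dots> \<le> ereal (- wealth_inf V n h S) + (\<Sum>k. ereal (wealth_inf (Vm' k) (nm' k) (hm' k) S))"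
            using supP[OF S] by (intro add_left_mono)
          finally show "0 \<le> ereal (wealth_inf (- V) n (negh h) S) + (\<Sum>k. ereal (wealth_inf (Vm' k) (nm' k) (hm' k) S))"
            by (simp add: wealth_inf_negh)
        qed
      qed
      then show ?thesis by (simp add: wealth_negh)
    qed
    show "ereal V + barI U fm \<le> x"
    proof (cases "endowment P = \<infinity>")
      case True then show ?thesis using x by simp
    next
      case False
      have sumV: "summable Vm'" using False endP Vm'pos by (intro summable_ereal) auto
      define E where "E = suminf Vm'"
      have xE: "x = ereal E" using x endP suminf_ereal'[OF sumV] E_def by simp
      have "0 \<le> ereal (- V) + (\<Sum>k. ereal (Vm' k))" using NLf[OF ne, of 0] by simp
      then have EV: "V \<le> E" using suminf_ereal'[OF sumV] E_def by simp
      have eps: "ereal V + barI U fm \<le> x + ereal e" if e: "0 < e" for e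
      proof -
        define Vm where "Vm = (\<lambda>m. case m of 0 \<Rightarrow> e | Suc k \<Rightarrow> Vm' k)"
        define hm where "hm = (\<lambda>m. case m of 0 \<Rightarrow> zh | Suc k \<Rightarrow> eff (nm' k) (hm' k))"
        have w0: "wealth (Vm 0) n (hm 0) j S = e" for j S by (simp add: Vm_def hm_def)
        have wS: "wealth (Vm (Suc k)) n (hm (Suc k)) j S = wealth (Vm' k) (nm' k) (hm' k) (min j n) S" for k j S
          by (simp add: Vm_def hm_def wealth_stop)
        have VmS: "(\<lambda>m. Vm (Suc m)) = Vm'" by (simp add: Vm_def fun_eq_iff)
        have sVm: "summable Vm" using sumV VmS summable_Suc_iff by metis
        have sumVm: "suminf Vm = e + E"
          using suminf_split_head[OF sVm] VmS E_def by (simp add: Vm_def)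
        have posw: "0 \<le> wealth (Vm m) n (hm m) j S" if "S \<in> U" for m j S
        proof (cases m)
          case 0 then show ?thesis using w0 e by simp
        next
          case (Suc k)
          then show ?thesis using wS pos_inter[OF nL S0 U _ that] posP by simp
        qed
        have sumsplit: "(\<Sum>m. ereal (wealth (Vm m) n (hm m) j S))
            = ereal e + (\<Sum>k. ereal (wealth (Vm' k) (nm' k) (hm' k) (min j n) S))" if "S \<in> U" for j S
          using ereal_suminf_head[of "\<lambda>m. wealth (Vm m) n (hm m) j S"] posw[OF that] w0 wS by simp
        interpret qcons U n "- V" "negh h" Vm hm e
        proof (unfold_locales)
          show "1 \<le> n" by (rule n1)
          show "0 < e" by (rule e)
          show "0 \<le> Vm m" for m using Vm'pos e by (cases m) (simp_all add: Vm_def)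
          show "summable Vm" by (rule sVm)
          show "0 < suminf Vm" using sumVm e EV Vm'pos suminf_nonneg[OF sumV] E_def by simp
          show "e \<le> - V + suminf Vm" using sumVm EV by simp
          show "0 \<le> wealth (Vm m) n (hm m) j S" if "S \<in> U" for m S j using posw[OF that] .
          show "ereal e \<le> ereal (wealth (- V) n (negh h) j S) + (\<Sum>m. ereal (wealth (Vm m) n (hm m) j S))"
            if S: "S \<in> U" and j: "j \<le> n" for S j
          proof -
            have A: "0 \<le> ereal (- wealth V n h j S) + (\<Sum>k. ereal (wealth (Vm' k) (nm' k) (hm' k) j S))"
              using NLf[OF S] .
            have "ereal e = ereal e + 0" by simp
            also have "\<dots> \<le> ereal e + (ereal (- wealth V n h j S) + (\<Sum>k. ereal (wealth (Vm' k) (nm' k) (hm' k) j S)))"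
              using A by (intro add_left_mono)
            also have "\<dots> = ereal (wealth (- V) n (negh h) j S) + (\<Sum>m. ereal (wealth (Vm m) n (hm m) j S))"
              using sumsplit[OF S, of j] j by (simp add: wealth_negh min_absorb1 ac_simps)
            finally show ?thesis .
          qed
        qed
        obtain Q where Qpos: "\<forall>m. positive_simple U (Q m)" and Qn: "\<forall>m. fst (snd (Q m)) = n"
          and Qend: "(\<Sum>m. ereal (fst (Q m))) = ereal (- V + suminf Vm)"
          and Qsup: "\<forall>S\<in>U. ereal (wealth_inf (- V) n (negh h) S) + (\<Sum>m. ereal (wealth_inf (Vm m) n (hm m) S))
             \<le> (\<Sum>m. ereal (wealth_inf (fst (Q m)) n (snd (snd (Q m))) S))"
          using main by blast
        define Q' :: "nat \<Rightarrow> simple_pf" where "Q' = (\<lambda>m. case m of 0 \<Rightarrow> (0, 1, zh) | Suc k \<Rightarrow> Q k)"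
        have pg: "pos_gen_portfolio U Q'"
          unfolding pos_gen_portfolio_def gen_portfolio_def
        proof (intro conjI allI impI ballI)
          show "simple_portfolio (Q' 0)" by (simp add: Q'_def simple_portfolio_def)
          fix m :: nat assume "1 \<le> m"
          then obtain k where "m = Suc k" by (cases m) auto
          then show "positive_simple U (Q' m)" using Qpos by (simp add: Q'_def)
        next
          fix j S show "wealth (fst (Q' 0)) (fst (snd (Q' 0))) (snd (snd (Q' 0))) j S = 0"
            by (simp add: Q'_def)
        qed
        have sh: "superhedges U fm Q'"
          unfolding superhedges_def
        proof
          fix S assume S: "S \<in> U"
          have A0: "0 \<le> (\<Sum>k. ereal (wealth (Vm' k) (nm' k) (hm' k) n S))"
            using pos_inter[OF nL S0 U _ S] posP by (intro suminf_0_le) auto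
          have "fm S \<le> ereal (- wealth_inf V n h S) + (ereal e + (\<Sum>k. ereal (wealth (Vm' k) (nm' k) (hm' k) n S)))"
            unfolding fm_def
            using ereal_max_le_aux[OF A0 _ less_imp_le[OF e]] NLf[OF S, of n]
            by (simp add: wealth_inf_def)
          also have "\<dots> = ereal (wealth_inf (- V) n (negh h) S) + (\<Sum>m. ereal (wealth_inf (Vm m) n (hm m) S))"
            using sumsplit[OF S, of n] by (simp add: wealth_inf_def wealth_negh)
          also have "\<dots> \<le> (\<Sum>m. ereal (wealth_inf (fst (Q m)) n (snd (snd (Q m))) S))"
            using Qsup S by blast
          also have "\<dots> = gen_wealth Q' S"
            unfolding gen_wealth_def Q'_def using Qn by simp
          finally show "fm S \<le> gen_wealth Q' S" .
        qed
        have "barI U fm \<le> endowment Q'"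
          unfolding barI_def using pg sh by (intro Inf_lower) blast
        also have "endowment Q' = ereal (- V + suminf Vm)"
          unfolding endowment_def Q'_def using Qend by simp
        finally have "ereal V + barI U fm \<le> ereal V + ereal (- V + suminf Vm)" by (intro add_left_mono)
        also have "\<dots> = x + ereal e" using xE sumVm by simp
        finally show ?thesis .
      qed
      show ?thesis using eps by (rule ereal_le_epsilon2)
    qed
  qed
  then show "ereal V + barI U (\<lambda>S. ereal (max (- wealth_inf V n h S) 0)) \<le> barI U (\<lambda>S. ereal (max (wealth_inf V n h S) 0))"
    unfolding fm_def fp_def .
qed

theorem theorem5p1:
  fixes s0 :: real and T :: "traj set"
  assumes "trajectory_set s0 T"
    and nL: "\<forall>S\<in>T. \<forall>j. barsigma (shifted_cond_space T S j) (\<lambda>_. 0) \<ge> 0"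
  shows "\<forall>S\<in>T. \<forall>j. LOP (shifted_cond_space T S j) \<and> cond_K (shifted_cond_space T S j)"
proof (intro ballI allI conjI)
  fix S j assume S: "S \<in> T"
  show "LOP (shifted_cond_space T S j)" by (rule LOP_shifted[OF nL S refl])
  show "cond_K (shifted_cond_space T S j)" by (rule K_shifted[OF nL S refl])
qed


end
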